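(* For every $r\ge1$, $C_{1,r}=\dfrac{(-1)^r}{r+1}$; equivalently \[ \sum_{\substack{(n_1,\dots,n_r)\in\mathbb Z_{\ge0}^r\\ n_1+\dots+n_r=r\\ n_{j+1}+\dots+n_r\le r-j\ (1\le j<r)}}\ \prod_{j=1}^r\frac{B_{n_j}}{n_j!}=\frac{1}{r+1}. \]
   Context: Bernoulli numbers $B_n$ are defined by $\sum_{n\ge0}B_n x^n/n! = xe^x/(e^x-1)$ (so $B_1=+1/2$). For a finite set $S\subset\mathbb Z_{\ge0}^r$, $C(S)=(-1)^r\sum_{(n_1,\dots,n_r)\in S}\prod_{j}B_{n_j}/n_j!$. For $1\le i\le r$, $C_{i,r}=C(S)$ where $S$ is the set of $(n_1,\dots,n_r)\in\mathbb Z_{\ge0}^r$ with $n_1+\dots+n_r=r$, $n_1+\dots+n_j<j$ for $1\le j<i$, and $n_{j+1}+\dots+n_r\le r-j$ for $i\le j<r$. (So $C_{1,r}$ is given by the set displayed in the claim.) *)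

theory Defs
  imports "HOL-Analysis.Analysis" "HOL-Computational_Algebra.Formal_Power_Series"
begin

text \<open>Bernoulli numbers with B_1 = +1/2, defined by the exponential generating
  function x e^x / (e^x - 1), as a formal power series over the reals.\<close>
definition bernoulli_egf :: "real fps" where
  "bernoulli_egf = fps_X * fps_exp 1 / (fps_exp 1 - 1)"

definition bernoulli :: "nat \<Rightarrow> real" where
  "bernoulli n = fact n * fps_nth bernoulli_egf n"

text \<open>Tuples (n_1,...,n_r) in Z_{>=0}^r are represented as functions
  nat => nat that vanish outside {1..r}.\<close>
definition tuples :: "nat \<Rightarrow> (nat \<Rightarrow> nat) set" where
  "tuples r = {n. \<forall>j. j \<notin> {1..r} \<longrightarrow> n j = 0}"

definition Cset :: "nat \<Rightarrow> (nat \<Rightarrow> nat) set \<Rightarrow> real" where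
  "Cset r S = (-1) ^ r * (\<Sum>n\<in>S. \<Prod>j=1..r. bernoulli (n j) / fact (n j))"

definition Cset_index :: "nat \<Rightarrow> nat \<Rightarrow> (nat \<Rightarrow> nat) set" where
  "Cset_index i r = {n \<in> tuples r.
      (\<Sum>j=1..r. n j) = r \<and>
      (\<forall>j. 1 \<le> j \<and> j < i \<longrightarrow> (\<Sum>k=1..j. n k) < j) \<and>
      (\<forall>j. i \<le> j \<and> j < r \<longrightarrow> (\<Sum>k=j+1..r. n k) \<le> r - j)}"

definition C_ir :: "nat \<Rightarrow> nat \<Rightarrow> real" where
  "C_ir i r = Cset r (Cset_index i r)"

end

theory Submission
  imports Defs
begin


no_notation vec_nth (infixl \<open>$\<close> 90)
notation fps_nth (infixl \<open>$\<close> 75)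

definition qq :: "real fps" where "qq = Abs_fps (\<lambda>n. 1 / fact (n+1))"
definition vv :: "real fps" where "vv = inverse qq"
abbreviation EE :: "real fps" where "EE \<equiv> fps_exp 1"

lemma qq0: "qq $ 0 = 1" by (simp add: qq_def)
lemma Xqq: "fps_X * qq = EE - 1"
  by (rule fps_ext) (auto simp: qq_def fact_reduce)
lemma vv_E: "vv * (EE - 1) = fps_X"
proof -
  have "vv * (EE - 1) = fps_X * (inverse qq * qq)" by (simp add: vv_def Xqq[symmetric] algebra_simps)
  also have "inverse qq * qq = 1" using qq0 by (intro inverse_mult_eq_1) simp
  finally show ?thesis by simp
qed
lemma E1_nz: "EE - 1 \<noteq> 0"
proof
  assume "EE - 1 = 0" then have "(EE - 1) $ 1 = 0" by simp
  then show False by simp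
qed
lemma phi_eq: "bernoulli_egf = vv + fps_X"
proof -
  have dv: "(EE - 1) dvd fps_X * EE" by (rule dvdI[of _ _ "vv * EE"]) (simp add: vv_E[symmetric] algebra_simps)
  have "bernoulli_egf * (EE - 1) = fps_X * EE" unfolding bernoulli_egf_def
    using dv by (rule dvd_div_mult_self)
  also have "\<dots> = (vv + fps_X) * (EE - 1)" by (simp add: algebra_simps vv_E[symmetric])
  finally show ?thesis using E1_nz by simp
qed
lemma vv0: "vv $ 0 = 1" by (simp add: vv_def qq0)

lemma ring_aux: "(a::'a::comm_ring_1) * 1 - (a * a + a * b) - a + a * a + b * a = 0"
  by (simp add: algebra_simps)

lemma vv_ode: "fps_X * fps_deriv vv = vv - fps_X * vv - vv^2"
proof -
  have h2: "fps_deriv vv * (EE - 1) + vv * EE = 1"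
    using arg_cong[OF vv_E, of fps_deriv] by (simp add: algebra_simps)
  have "(fps_X * fps_deriv vv - (vv - fps_X * vv - vv^2)) * (EE - 1) =
        fps_X * (fps_deriv vv * (EE - 1) + vv * EE) - fps_X * vv * EE - vv * (EE - 1) + fps_X * (vv * (EE - 1)) + vv * (vv * (EE - 1))"
    by (simp add: algebra_simps power2_eq_square)
  also have "\<dots> = 0"
  proof -
    have e3: "fps_X * vv * EE = fps_X * (vv * (EE - 1)) + fps_X * vv" by (simp add: algebra_simps)
    show ?thesis unfolding h2 e3 vv_E by (rule ring_aux)
  qed
  finally show ?thesis using E1_nz by simp
qed

lemma of_nat_mult_nth: "((of_nat k :: real fps) * f) $ n = of_nat k * f $ n"
  by (simp only: fps_of_nat[symmetric] fps_mult_left_const_nth)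

lemma vv_e: "fps_X * fps_deriv (vv^Suc i) = of_nat (Suc i) * (vv^Suc i - fps_X * vv^Suc i - vv^Suc (Suc i))"
proof -
  have "fps_X * fps_deriv (vv^Suc i) = of_nat (Suc i) * vv^i * (fps_X * fps_deriv vv)"
    by (simp only: fps_deriv_power' diff_Suc_1 mult_ac)
  also have "\<dots> = of_nat (Suc i) * (vv^i * vv - fps_X * (vv^i * vv) - vv^i * vv * vv)"
    by (simp only: vv_ode power2_eq_square right_diff_distrib mult_ac)
  also have "\<dots> = of_nat (Suc i) * (vv^Suc i - fps_X * vv^Suc i - vv^Suc (Suc i))"
    by (simp only: power_Suc2)
  finally show ?thesis .
qed

lemma vv_pow_step: "(vv^(Suc (Suc i))) $ Suc i = - ((vv^Suc i) $ i)"
proof -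
  have a: "(fps_X * fps_deriv (vv^Suc i)) $ Suc i = of_nat (Suc i) * (vv^Suc i) $ Suc i"
    by (simp only: fps_X_mult_nth fps_deriv_nth) simp
  have b: "(of_nat (Suc i) * (vv^Suc i - fps_X * vv^Suc i - vv^Suc (Suc i)) :: real fps) $ Suc i
     = of_nat (Suc i) * ((vv^Suc i)$Suc i - (vv^Suc i)$i - (vv^Suc (Suc i))$Suc i)"
    by (simp only: of_nat_mult_nth fps_sub_nth fps_X_mult_nth) simp
  have "real (Suc i) * (vv^Suc i) $ Suc i = real (Suc i) * ((vv^Suc i)$Suc i - (vv^Suc i)$i - (vv^Suc (Suc i))$Suc i)"
    using trans[OF sym[OF a[unfolded vv_e[of i]]] b] by simp
  then have "(vv^Suc i) $ Suc i = (vv^Suc i)$Suc i - (vv^Suc i)$i - (vv^Suc (Suc i))$Suc i"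
    by (metis mult_cancel_left of_nat_eq_0_iff nat.distinct(1))
  then show ?thesis by linarith
qed

lemma vv_pow: "(vv^Suc i) $ i = (-1)^i"
proof (induction i)
  case 0 then show ?case by (simp add: vv0)
next
  case (Suc i)
  have "(vv^Suc (Suc i)) $ Suc i = - ((-1)^i)" using vv_pow_step[of i] Suc.IH by (simp only:)
  also have "- ((-1)^i) = (-1::real)^Suc i" by simp
  finally show ?case .
qed


lemma c_top: "(bernoulli_egf ^ (r+1)) $ r = 1"
proof -
  have "bernoulli_egf ^ (r+1) = (\<Sum>k\<le>r+1. of_nat ((r+1) choose k) * fps_X^k * vv^(r+1-k))"
    unfolding phi_eq by (subst add.commute) (rule binomial_ring)
  then have "(bernoulli_egf ^ (r+1)) $ r = (\<Sum>k\<le>r+1. of_nat ((r+1) choose k) * (fps_X^k * vv^(r+1-k)) $ r)"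
    by (simp only: fps_sum_nth mult.assoc of_nat_mult_nth)
  also have "\<dots> = (\<Sum>k\<le>r+1. if k \<le> r then of_nat ((r+1) choose k) * (-1)^(r-k) else 0)"
  proof (rule sum.cong)
    fix k assume "k \<in> {..r+1}"
    show "of_nat ((r+1) choose k) * (fps_X^k * vv^(r+1-k)) $ r = (if k \<le> r then of_nat ((r+1) choose k) * (-1)^(r-k) else 0)"
    proof (cases "k \<le> r")
      case True
      then have "r+1-k = Suc (r-k)" by simp
      then have "(vv^(r+1-k)) $ (r - k) = (-1)^(r-k)" using vv_pow[of "r-k"] by (simp only:)
      then show ?thesis using True by (simp add: fps_X_power_mult_nth)
    qed (simp add: fps_X_power_mult_nth)
  qed simp
  also have "\<dots> = (\<Sum>k\<le>r. of_nat ((r+1) choose k) * (-1)^(r-k))"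
    by (simp add: sum.If_cases)
  also have "\<dots> = 1"
  proof -
    have "(\<Sum>k\<le>r+1. of_nat ((r+1) choose k) * (-1::real)^(r+1-k)) = 0"
      using binomial_ring[of "1::real" "-1" "r+1"] by simp
    then have "(\<Sum>k\<le>r. of_nat ((r+1) choose k) * (-1::real)^(r+1-k)) + 1 = 0" by simp
    moreover have "(\<Sum>k\<le>r. of_nat ((r+1) choose k) * (-1::real)^(r+1-k)) = - (\<Sum>k\<le>r. of_nat ((r+1) choose k) * (-1)^(r-k))"
      by (simp add: sum_negf[symmetric] Suc_diff_le)
    ultimately show ?thesis by linarith
  qed
  finally show ?thesis .
qed


definition bb :: "nat \<Rightarrow> real" where "bb k = bernoulli_egf $ k"
definition cc :: "nat \<Rightarrow> nat \<Rightarrow> real" where "cc N s = (bernoulli_egf ^ N) $ s"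

definition GG :: "nat \<Rightarrow> nat \<Rightarrow> nat \<Rightarrow> (nat \<Rightarrow> nat) set" where
  "GG lo m s = {n. (\<forall>j. j \<notin> {lo..<lo+m} \<longrightarrow> n j = 0) \<and> (\<Sum>k\<in>{lo..<lo+m}. n k) = s \<and>
     (\<forall>j. lo \<le> j \<and> j < lo+m \<longrightarrow> (\<Sum>k\<in>{j..<lo+m}. n k) \<le> lo+m-j)}"

definition DD :: "nat \<Rightarrow> nat \<Rightarrow> nat \<Rightarrow> real" where
  "DD lo m s = (\<Sum>n\<in>GG lo m s. \<Prod>k\<in>{lo..<lo+m}. bb (n k))"

lemma GG_0: "GG lo 0 s = (if s = 0 then {\<lambda>_. 0} else {})"
  by (auto simp: GG_def)

lemma sum_upd_out: "lo \<notin> A \<Longrightarrow> (\<Sum>k\<in>A. (f(lo := a)) k) = (\<Sum>k\<in>A. f k)"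
  by (rule sum.cong) auto

lemma ivl_split: "{lo..<lo + Suc m} = insert lo {Suc lo..<Suc lo + m}"
  by auto

lemma GG_step: "GG lo (Suc m) s = (if s \<le> Suc m then (\<lambda>(a,n'). n'(lo:=a)) ` (SIGMA a:{..s}. GG (Suc lo) m (s-a)) else {})"
proof (cases "s \<le> Suc m")
  case False
  have "GG lo (Suc m) s = {}"
  proof (rule ccontr)
    assume "GG lo (Suc m) s \<noteq> {}"
    then obtain n where "n \<in> GG lo (Suc m) s" by blast
    then have "(\<Sum>k\<in>{lo..<lo+Suc m}. n k) = s" "(\<Sum>k\<in>{lo..<lo+Suc m}. n k) \<le> lo + Suc m - lo"
      unfolding GG_def by auto
    then show False using False by simp
  qed
  then show ?thesis using False by simp
next
  case True
  have "GG lo (Suc m) s = (\<lambda>(a,n'). n'(lo:=a)) ` (SIGMA a:{..s}. GG (Suc lo) m (s-a))"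
  proof
    show "GG lo (Suc m) s \<subseteq> (\<lambda>(a,n'). n'(lo:=a)) ` (SIGMA a:{..s}. GG (Suc lo) m (s-a))"
    proof
      fix n assume n: "n \<in> GG lo (Suc m) s"
      have lo_notin: "lo \<notin> {Suc lo..<Suc lo + m}" by simp
      have tot: "n lo + (\<Sum>k\<in>{Suc lo..<Suc lo+m}. n k) = s"
        using n unfolding GG_def ivl_split by simp
      have "n(lo := 0) \<in> GG (Suc lo) m (s - n lo)"
        unfolding GG_def
      proof (intro CollectI conjI allI impI)
        fix j assume "j \<notin> {Suc lo..<Suc lo + m}"
        then show "(n(lo := 0)) j = 0" using n unfolding GG_def by auto
      next
        show "(\<Sum>k\<in>{Suc lo..<Suc lo + m}. (n(lo := 0)) k) = s - n lo"
          using tot by (simp add: sum_upd_out)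
      next
        fix j assume j: "Suc lo \<le> j \<and> j < Suc lo + m"
        then have "(\<Sum>k\<in>{j..<lo + Suc m}. n k) \<le> lo + Suc m - j" using n unfolding GG_def by auto
        moreover have "lo \<notin> {j..<Suc lo + m}" using j by simp
        ultimately show "(\<Sum>k\<in>{j..<Suc lo + m}. (n(lo := 0)) k) \<le> Suc lo + m - j"
          by (simp add: sum_upd_out)
      qed
      moreover have "n lo \<le> s" using tot by linarith
      ultimately have "(n lo, n(lo:=0)) \<in> (SIGMA a:{..s}. GG (Suc lo) m (s-a))" by simp
      moreover have "n = (\<lambda>(a,n'). n'(lo:=a)) (n lo, n(lo:=0))" by simp
      ultimately show "n \<in> (\<lambda>(a,n'). n'(lo:=a)) ` (SIGMA a:{..s}. GG (Suc lo) m (s-a))" by blast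
    qed
  next
    show "(\<lambda>(a,n'). n'(lo:=a)) ` (SIGMA a:{..s}. GG (Suc lo) m (s-a)) \<subseteq> GG lo (Suc m) s"
    proof
      fix x assume "x \<in> (\<lambda>(a,n'). n'(lo:=a)) ` (SIGMA a:{..s}. GG (Suc lo) m (s-a))"
      then obtain a n' where x: "x = n'(lo:=a)" and a: "a \<in> {..s}" and n': "n' \<in> GG (Suc lo) m (s - a)"
        by auto
      have tot: "(\<Sum>k\<in>{lo..<lo + Suc m}. (n'(lo := a)) k) = s"
        unfolding ivl_split using a n' unfolding GG_def by (simp add: sum_upd_out)
      show "x \<in> GG lo (Suc m) s"
        unfolding GG_def x
      proof (intro CollectI conjI allI impI)
        fix j assume "j \<notin> {lo..<lo + Suc m}"
        then show "(n'(lo := a)) j = 0" using n' unfolding GG_def by auto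
      next
        show "(\<Sum>k\<in>{lo..<lo + Suc m}. (n'(lo := a)) k) = s" by (rule tot)
      next
        fix j assume j: "lo \<le> j \<and> j < lo + Suc m"
        show "(\<Sum>k\<in>{j..<lo + Suc m}. (n'(lo := a)) k) \<le> lo + Suc m - j"
        proof (cases "j = lo")
          case True
          then show ?thesis using tot \<open>s \<le> Suc m\<close> by simp
        next
          case False
          then have "Suc lo \<le> j \<and> j < Suc lo + m" using j by simp
          then have "(\<Sum>k\<in>{j..<Suc lo + m}. n' k) \<le> Suc lo + m - j" using n' unfolding GG_def by auto
          moreover have "lo \<notin> {j..<Suc lo + m}" using False j by simp
          ultimately show ?thesis by (simp add: sum_upd_out)
        qed
      qed
    qed
  qed
  then show ?thesis using True by simp
qed

lemma GG_inj: "inj_on (\<lambda>(a,n'). n'(lo:=a)) (SIGMA a:A. GG (Suc lo) m (T a))"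
proof (rule inj_onI, clarify)
  fix a n' a2 n2 assume "n' \<in> GG (Suc lo) m (T a)" "n2 \<in> GG (Suc lo) m (T a2)" and eq: "n'(lo := a) = n2(lo := a2)"
  then have "n' lo = 0" "n2 lo = 0" unfolding GG_def by auto
  moreover have "a = a2" using fun_cong[OF eq, of lo] by simp
  ultimately show "a = a2 \<and> n' = n2" using eq by (metis fun_upd_triv fun_upd_upd)
qed

lemma GG_finite: "finite (GG lo m s)"
proof (induction m arbitrary: lo s)
  case 0 then show ?case by (simp add: GG_0)
next
  case (Suc m) then show ?case by (simp add: GG_step)
qed

lemma DD_0: "DD lo 0 s = (if s = 0 then 1 else 0)"
  by (simp add: DD_def GG_0)

lemma DD_step: "DD lo (Suc m) s = (if s \<le> Suc m then (\<Sum>a\<le>s. bb a * DD (Suc lo) m (s-a)) else 0)"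
proof (cases "s \<le> Suc m")
  case False then show ?thesis by (simp add: DD_def GG_step)
next
  case True
  have "DD lo (Suc m) s = (\<Sum>x\<in>(SIGMA a:{..s}. GG (Suc lo) m (s-a)). \<Prod>k\<in>{lo..<lo+Suc m}. bb ((case x of (a,n') \<Rightarrow> n'(lo:=a)) k))"
    unfolding DD_def GG_step if_P[OF True] by (simp only: sum.reindex[OF GG_inj] o_def)
  also have "\<dots> = (\<Sum>a\<le>s. \<Sum>n'\<in>GG (Suc lo) m (s-a). \<Prod>k\<in>{lo..<lo+Suc m}. bb ((n'(lo:=a)) k))"
    using sum.Sigma[of "{..s}" "\<lambda>a. GG (Suc lo) m (s-a)" "\<lambda>a n'. \<Prod>k\<in>{lo..<lo+Suc m}. bb ((n'(lo:=a)) k)"]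
    by (simp add: GG_finite case_prod_unfold)
  also have "\<dots> = (\<Sum>a\<le>s. \<Sum>n'\<in>GG (Suc lo) m (s-a). bb a * (\<Prod>k\<in>{Suc lo..<Suc lo+m}. bb (n' k)))"
  proof (intro sum.cong refl)
    fix a n'
    have "(\<Prod>k\<in>{Suc lo..<Suc lo+m}. bb ((n'(lo:=a)) k)) = (\<Prod>k\<in>{Suc lo..<Suc lo+m}. bb (n' k))"
      by (rule prod.cong) auto
    then show "(\<Prod>k\<in>{lo..<lo+Suc m}. bb ((n'(lo:=a)) k)) = bb a * (\<Prod>k\<in>{Suc lo..<Suc lo+m}. bb (n' k))"
      unfolding ivl_split by simp
  qed
  also have "\<dots> = (\<Sum>a\<le>s. bb a * DD (Suc lo) m (s-a))"
    by (simp add: DD_def sum_distrib_left)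
  finally show ?thesis using True by simp
qed



lemma conv1: "(\<Sum>a\<le>s. bb a * cc N (s-a)) = cc (Suc N) s"
  by (simp add: cc_def bb_def fps_mult_nth atLeast0AtMost)

lemma Xd_nth: "(fps_X * fps_deriv g) $ t = (of_nat t :: real) * g $ t"
  by (cases t) auto

lemma deriv_id: "(of_nat (Suc N) :: real fps) * (bernoulli_egf * (fps_X * fps_deriv (bernoulli_egf ^ N)))
   = of_nat N * (fps_X * fps_deriv (bernoulli_egf ^ Suc N))"
proof (cases N)
  case 0 then show ?thesis by simp
next
  case (Suc M)
  show ?thesis unfolding Suc fps_deriv_power' diff_Suc_1 by (simp only: power_Suc mult_ac)
qed

lemma conv2: "real (Suc N) * (\<Sum>a\<le>s. bb a * (real (s-a) * cc N (s-a))) = real N * real s * cc (Suc N) s"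
proof -
  have "(\<Sum>a\<le>s. bb a * (real (s-a) * cc N (s-a))) = (bernoulli_egf * (fps_X * fps_deriv (bernoulli_egf ^ N))) $ s"
  proof -
    have g: "\<And>G. (bernoulli_egf * G) $ s = (\<Sum>a\<le>s. bb a * G $ (s-a))"
      by (simp add: fps_mult_nth atLeast0AtMost bb_def)
    show ?thesis unfolding g Xd_nth cc_def ..
  qed
  then have "real (Suc N) * (\<Sum>a\<le>s. bb a * (real (s-a) * cc N (s-a))) = ((of_nat (Suc N) :: real fps) * (bernoulli_egf * (fps_X * fps_deriv (bernoulli_egf ^ N)))) $ s"
    by (simp only: of_nat_mult_nth)
  also have "\<dots> = (of_nat N * (fps_X * fps_deriv (bernoulli_egf ^ Suc N))) $ s" by (simp only: deriv_id)
  also have "\<dots> = real N * (real s * cc (Suc N) s)" by (simp only: of_nat_mult_nth Xd_nth cc_def)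
  finally show ?thesis by simp
qed

lemma cc_1_0: "cc (Suc 0) 0 = 1"
  unfolding cc_def power_Suc power_0 mult_1_right phi_eq by (simp add: vv0)

lemma DD_formula: "DD lo m s = (if s \<le> m then (real (m+1) - real s) / real (m+1) * cc (m+1) s else 0)"
proof (induction m arbitrary: lo s)
  case 0 then show ?case by (simp add: DD_0 cc_1_0)
next
  case (Suc m)
  show ?case
  proof (cases "s \<le> Suc m")
    case False then show ?thesis by (simp add: DD_step)
  next
    case True
    define N where "N = Suc m"
    have Npos: "real N > 0" by (simp add: N_def)
    have "DD lo (Suc m) s = (\<Sum>a\<le>s. bb a * DD (Suc lo) m (s-a))" using True by (simp add: DD_step)
    also have "\<dots> = (\<Sum>a\<le>s. (real N * (bb a * cc N (s-a)) - bb a * (real (s-a) * cc N (s-a))) / real N)"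
    proof (rule sum.cong[OF refl])
      fix a assume a: "a \<in> {..s}"
      have "DD (Suc lo) m (s-a) = (real N - real (s-a)) / real N * cc N (s-a)"
      proof (cases "s - a \<le> m")
        case True then show ?thesis using Suc.IH[of "Suc lo" "s-a"] by (simp add: N_def)
      next
        case False
        then have "s - a = N" using \<open>s \<le> Suc m\<close> a by (simp add: N_def)
        then show ?thesis using Suc.IH[of "Suc lo" "s-a"] False by simp
      qed
      then have h: "DD (Suc lo) m (s-a) = (real N * cc N (s-a) - real (s-a) * cc N (s-a)) / real N"
        by (simp add: left_diff_distrib)
      show "bb a * DD (Suc lo) m (s-a) = (real N * (bb a * cc N (s-a)) - bb a * (real (s-a) * cc N (s-a))) / real N"
        unfolding h by (simp add: algebra_simps)
    qed
    also have "\<dots> = (real N * cc (Suc N) s - (\<Sum>a\<le>s. bb a * (real (s-a) * cc N (s-a)))) / real N"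
      by (simp only: sum_divide_distrib[symmetric] sum_subtractf sum_distrib_left[symmetric] conv1)
    also have "\<dots> = (real (Suc N) - real s) / real (Suc N) * cc (Suc N) s"
    proof -
      have c2: "(\<Sum>a\<le>s. bb a * (real (s-a) * cc N (s-a))) = real N * real s * cc (Suc N) s / real (Suc N)"
        using conv2[of N s] by (simp add: field_simps)
      have alg: "\<And>x y C::real. x > 0 \<Longrightarrow> (x * C - x * y * C / (x + 1)) / x = ((x + 1) - y) / (x + 1) * C"
      proof -
        fix x y C :: real assume x: "x > 0"
        have x1: "x + 1 \<noteq> 0" using x by simp
        have "(x * C - x * y * C / (x + 1)) / x = C - y * C / (x + 1)"
          using x by (simp add: diff_divide_distrib)
        also have "\<dots> = ((x + 1) - y) / (x + 1) * C"
          using x1 by (simp add: diff_divide_distrib left_diff_distrib)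
        finally show "(x * C - x * y * C / (x + 1)) / x = ((x + 1) - y) / (x + 1) * C" .
      qed
      show ?thesis unfolding c2 of_nat_Suc using alg[OF Npos] by (simp add: add.commute)
    qed
    finally show ?thesis using True by (simp add: N_def)
  qed
qed

lemma Cset_GG: "Cset_index 1 r = GG 1 r r"
proof -
  have iv: "{1..<1+r} = {1..r}" by auto
  have "\<And>n. n \<in> Cset_index 1 r \<longleftrightarrow> n \<in> GG 1 r r"
  proof -
    fix n :: "nat \<Rightarrow> nat"
    have A: "(\<forall>j. 1 \<le> j \<and> j < r \<longrightarrow> (\<Sum>k=j+1..r. n k) \<le> r - j) \<longleftrightarrow>
             (\<forall>j. 2 \<le> j \<and> j < 1+r \<longrightarrow> (\<Sum>k\<in>{j..<1+r}. n k) \<le> 1+r-j)"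
    proof
      assume H: "\<forall>j. 1 \<le> j \<and> j < r \<longrightarrow> (\<Sum>k=j+1..r. n k) \<le> r - j"
      show "\<forall>j. 2 \<le> j \<and> j < 1+r \<longrightarrow> (\<Sum>k\<in>{j..<1+r}. n k) \<le> 1+r-j"
      proof (intro allI impI)
        fix j assume j: "2 \<le> j \<and> j < 1+r"
        have "{j..<1+r} = {(j-1)+1..r}" using j by auto
        moreover have "1 \<le> j-1 \<and> j-1 < r" using j by arith
        ultimately show "(\<Sum>k\<in>{j..<1+r}. n k) \<le> 1+r-j" using H[rule_format, of "j-1"] j by simp
      qed
    next
      assume H: "\<forall>j. 2 \<le> j \<and> j < 1+r \<longrightarrow> (\<Sum>k\<in>{j..<1+r}. n k) \<le> 1+r-j"
      show "\<forall>j. 1 \<le> j \<and> j < r \<longrightarrow> (\<Sum>k=j+1..r. n k) \<le> r - j"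
      proof (intro allI impI)
        fix j assume j: "1 \<le> j \<and> j < r"
        have "{j+1..r} = {j+1..<1+r}" by auto
        then show "(\<Sum>k=j+1..r. n k) \<le> r - j" using H[rule_format, of "j+1"] j by simp
      qed
    qed
    have B: "(\<Sum>k=1..r. n k) = r \<Longrightarrow> (\<forall>j. 1 \<le> j \<and> j < 1+r \<longrightarrow> (\<Sum>k\<in>{j..<1+r}. n k) \<le> 1+r-j) \<longleftrightarrow>
             (\<forall>j. 2 \<le> j \<and> j < 1+r \<longrightarrow> (\<Sum>k\<in>{j..<1+r}. n k) \<le> 1+r-j)"
    proof -
      assume s: "(\<Sum>k=1..r. n k) = r"
      show ?thesis
      proof
        assume "\<forall>j. 1 \<le> j \<and> j < 1+r \<longrightarrow> (\<Sum>k\<in>{j..<1+r}. n k) \<le> 1+r-j"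
        then show "\<forall>j. 2 \<le> j \<and> j < 1+r \<longrightarrow> (\<Sum>k\<in>{j..<1+r}. n k) \<le> 1+r-j" by auto
      next
        assume H: "\<forall>j. 2 \<le> j \<and> j < 1+r \<longrightarrow> (\<Sum>k\<in>{j..<1+r}. n k) \<le> 1+r-j"
        show "\<forall>j. 1 \<le> j \<and> j < 1+r \<longrightarrow> (\<Sum>k\<in>{j..<1+r}. n k) \<le> 1+r-j"
        proof (intro allI impI)
          fix j assume j: "1 \<le> j \<and> j < 1+r"
          show "(\<Sum>k\<in>{j..<1+r}. n k) \<le> 1+r-j"
          proof (cases "j = 1")
            case True then show ?thesis using s iv by simp
          next
            case False then show ?thesis using H j by simp
          qed
        qed
      qed
    qed
    show "n \<in> Cset_index 1 r \<longleftrightarrow> n \<in> GG 1 r r"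
      unfolding Cset_index_def GG_def tuples_def iv using A B by auto
  qed
  then show ?thesis by blast
qed

theorem lemma3p1:
  fixes r :: nat
  assumes "r \<ge> 1"
  shows "C_ir 1 r = (-1) ^ r / real (r + 1)"
proof -
  have iv: "{1..<1+r} = {1..r}" by auto
  have p: "\<And>n. (\<Prod>j=1..r. bernoulli (n j) / fact (n j)) = (\<Prod>k\<in>{1..<1+r}. bb (n k))"
    unfolding iv by (rule prod.cong) (simp_all add: bernoulli_def bb_def)
  have "C_ir 1 r = (-1)^r * DD 1 r r"
    unfolding C_ir_def Cset_def DD_def Cset_GG p ..
  also have "DD 1 r r = 1 / real (r+1)"
    using DD_formula[of 1 r r] c_top[of r] by (simp add: cc_def)
  finally show ?thesis by simp
qed

end
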